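(* Let $X$ be a complex manifold. (a) The set of tame pairs is generic (residual) in $X\times{\operatorname{Aut}}\,X$. (b) For a generic automorphism $f\in{\operatorname{Aut}}\,X$, a generic point of $X$ is tame for $f$.
   Context: ${\operatorname{Aut}}\,X$ is the group of holomorphic automorphisms of $X$ with the compact-open topology (a Polish group). For compact $K\subset X$ let $T_K^+=\{(x,g)\in X\times{\operatorname{Aut}}\,X: g^j(x)\in K\text{ for all } j\geq0\}$ and $T_K^-=\{(x,g)\in X\times{\operatorname{Aut}}\,X: g^j(x)\in K\text{ for all } j\leq0\}$. A pair $(p,f)\in X\times {\operatorname{Aut}}\,X$ is tame (equivalently, $p$ is tame for $f$) if whenever $(p,f)$ lies in the interior of $T_K^+\cup T_K^-$ for some compact $K\subset X$, then $(p,f)$ lies in $\operatorname{int}(T_L^+)\cup\operatorname{int}(T_L^-)$ for some compact $L\subset X$. Generic means residual. *)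

theory Defs
  imports "HOL-Analysis.Analysis"
begin

definition cholo_on :: "(complex ^ 'n) set \<Rightarrow> (complex ^ 'n \<Rightarrow> complex ^ 'm) \<Rightarrow> bool" where
  "cholo_on S F \<longleftrightarrow> (\<forall>x\<in>S. \<exists>L. (F has_derivative L) (at x) \<and> (\<forall>c v. L (c *s v) = c *s L v))"

definition complex_atlas :: "('a::topological_space set \<times> ('a \<Rightarrow> complex ^ 'n)) set \<Rightarrow> bool" where
  "complex_atlas A \<longleftrightarrow>
     \<Union>(fst ` A) = UNIV \<and>
     (\<forall>(U,\<phi>)\<in>A. open U \<and> open (\<phi> ` U) \<and> inj_on \<phi> U \<and> continuous_on U \<phi> \<and>
                 continuous_on (\<phi> ` U) (inv_into U \<phi>)) \<and>
     (\<forall>(U,\<phi>)\<in>A. \<forall>(V,\<psi>)\<in>A. cholo_on (\<phi> ` (U \<inter> V)) (\<psi> \<circ> inv_into U \<phi>))"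

definition holo_map :: "('a::topological_space set \<times> ('a \<Rightarrow> complex ^ 'n)) set \<Rightarrow> ('a \<Rightarrow> 'a) \<Rightarrow> bool" where
  "holo_map A h \<longleftrightarrow> continuous_on UNIV h \<and>
     (\<forall>(U,\<phi>)\<in>A. \<forall>(V,\<psi>)\<in>A. cholo_on (\<phi> ` (U \<inter> h -` V)) (\<psi> \<circ> h \<circ> inv_into U \<phi>))"

definition Aut :: "('a::topological_space set \<times> ('a \<Rightarrow> complex ^ 'n)) set \<Rightarrow> ('a \<Rightarrow> 'a) set" where
  "Aut A = {g. bij g \<and> holo_map A g \<and> holo_map A (inv g)}"

definition compact_open_top :: "('a::topological_space \<Rightarrow> 'a) set \<Rightarrow> ('a \<Rightarrow> 'a) topology" where
  "compact_open_top F = topology_generated_by {{g\<in>F. g ` K \<subseteq> U} | K U. compact K \<and> open U}"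

definition aut_top :: "('a::topological_space set \<times> ('a \<Rightarrow> complex ^ 'n)) set \<Rightarrow> ('a \<Rightarrow> 'a) topology" where
  "aut_top A = compact_open_top (Aut A)"

definition XA_top :: "('a::topological_space set \<times> ('a \<Rightarrow> complex ^ 'n)) set \<Rightarrow> ('a \<times> ('a \<Rightarrow> 'a)) topology" where
  "XA_top A = prod_topology euclidean (aut_top A)"

definition residual_in :: "'b topology \<Rightarrow> 'b set \<Rightarrow> bool" where
  "residual_in T S \<longleftrightarrow> S \<subseteq> topspace T \<and>
     (\<exists>\<F>. countable \<F> \<and> (\<forall>U\<in>\<F>. openin T U \<and> T closure_of U = topspace T) \<and>
          topspace T \<inter> \<Inter>\<F> \<subseteq> S)"

definition T_plus :: "('a::topological_space set \<times> ('a \<Rightarrow> complex ^ 'n)) set \<Rightarrow> 'a set \<Rightarrow> ('a \<times> ('a \<Rightarrow> 'a)) set" where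
  "T_plus A K = {(x,g). g \<in> Aut A \<and> (\<forall>j::nat. (g ^^ j) x \<in> K)}"

definition T_minus :: "('a::topological_space set \<times> ('a \<Rightarrow> complex ^ 'n)) set \<Rightarrow> 'a set \<Rightarrow> ('a \<times> ('a \<Rightarrow> 'a)) set" where
  "T_minus A K = {(x,g). g \<in> Aut A \<and> (\<forall>j::nat. (inv g ^^ j) x \<in> K)}"

definition tame :: "('a::topological_space set \<times> ('a \<Rightarrow> complex ^ 'n)) set \<Rightarrow> 'a \<Rightarrow> ('a \<Rightarrow> 'a) \<Rightarrow> bool" where
  "tame A p f \<longleftrightarrow>
     (\<forall>K. compact K \<and> (p,f) \<in> XA_top A interior_of (T_plus A K \<union> T_minus A K) \<longrightarrow>
        (\<exists>L. compact L \<and> (p,f) \<in> XA_top A interior_of (T_plus A L) \<union> XA_top A interior_of (T_minus A L)))"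

end

theory Submission
  imports Defs
begin

lemma lc_point:
  fixes A :: "('a::topological_space set \<times> ('a \<Rightarrow> complex ^ 'n)) set" and x :: 'a
  assumes "complex_atlas A" "open G" "x \<in> G"
  shows "\<exists>Q M. open Q \<and> compact M \<and> x \<in> Q \<and> Q \<subseteq> M \<and> M \<subseteq> G"
proof -
  from assms(1) have cov: "\<Union>(fst ` A) = UNIV" unfolding complex_atlas_def by (elim conjE)
  then have "x \<in> \<Union>(fst ` A)" by (simp only: UNIV_I)
  then obtain p where "p \<in> A" "x \<in> fst p" by blast
  then obtain U \<phi> where UA: "(U,\<phi>) \<in> A" and xU: "x \<in> U" by (cases p) auto
  from assms(1) have "\<forall>(U,\<phi>)\<in>A. open U \<and> open (\<phi> ` U) \<and> inj_on \<phi> U \<and> continuous_on U \<phi> \<and>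
                 continuous_on (\<phi> ` U) (inv_into U \<phi>)" unfolding complex_atlas_def by (elim conjE)
  with UA have oU: "open U" and oV: "open (\<phi> ` U)" and inj: "inj_on \<phi> U"
    and c1: "continuous_on U \<phi>" and c2: "continuous_on (\<phi> ` U) (inv_into U \<phi>)"
    by auto
  define \<psi> where "\<psi> = inv_into U \<phi>"
  have S_eq: "\<phi> ` (G \<inter> U) = \<psi> -` (G \<inter> U) \<inter> \<phi> ` U"
  proof
    show "\<phi> ` (G \<inter> U) \<subseteq> \<psi> -` (G \<inter> U) \<inter> \<phi> ` U"
      using inj by (auto simp: \<psi>_def)
    show "\<psi> -` (G \<inter> U) \<inter> \<phi> ` U \<subseteq> \<phi> ` (G \<inter> U)"
    proof
      fix y assume y: "y \<in> \<psi> -` (G \<inter> U) \<inter> \<phi> ` U"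
      then have "\<phi> (\<psi> y) = y" by (auto simp: \<psi>_def f_inv_into_f)
      with y show "y \<in> \<phi> ` (G \<inter> U)" by (metis IntE image_eqI vimageE)
    qed
  qed
  have oS: "open (\<phi> ` (G \<inter> U))"
    using c2 oV assms(2) oU S_eq unfolding \<psi>_def
    by (metis continuous_on_open_vimage open_Int)
  have "\<phi> x \<in> \<phi> ` (G \<inter> U)" using xU assms(3) by auto
  then obtain e where e: "e > 0" "cball (\<phi> x) e \<subseteq> \<phi> ` (G \<inter> U)"
    using oS open_contains_cball by blast
  define M where "M = \<psi> ` cball (\<phi> x) e"
  define Q where "Q = \<phi> -` ball (\<phi> x) e \<inter> U"
  have "compact M" unfolding M_def \<psi>_def
    by (rule compact_continuous_image, rule continuous_on_subset[OF c2]) (use e in auto)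
  moreover have "open Q" unfolding Q_def using c1 oU continuous_on_open_vimage by blast
  moreover have "x \<in> Q" using e xU by (auto simp: Q_def)
  moreover have "Q \<subseteq> M"
  proof
    fix z assume "z \<in> Q"
    then have "z \<in> U" "\<phi> z \<in> cball (\<phi> x) e" by (auto simp: Q_def)
    then show "z \<in> M" unfolding M_def \<psi>_def using inj by (metis image_eqI inv_into_f_f)
  qed
  moreover have "M \<subseteq> G"
  proof
    fix z assume "z \<in> M"
    then obtain y where "y \<in> cball (\<phi> x) e" "z = \<psi> y" by (auto simp: M_def)
    with e(2) obtain w where "w \<in> G \<inter> U" "y = \<phi> w" by blast
    then show "z \<in> G" using inj \<open>z = \<psi> y\<close> by (simp add: \<psi>_def)
  qed
  ultimately show ?thesis by blast
qed

lemma lc_compact: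
  fixes A :: "('a::topological_space set \<times> ('a \<Rightarrow> complex ^ 'n)) set" and C :: "'a set"
  assumes "complex_atlas A" "compact C" "open G" "C \<subseteq> G"
  shows "\<exists>Q M. open Q \<and> compact M \<and> C \<subseteq> Q \<and> Q \<subseteq> M \<and> M \<subseteq> G"
proof -
  have "\<forall>x\<in>C. \<exists>Q M. open Q \<and> compact M \<and> x \<in> Q \<and> Q \<subseteq> M \<and> M \<subseteq> G"
    using lc_point[OF assms(1) assms(3)] assms(4) by blast
  then obtain Qf Mf where P: "\<And>x. x \<in> C \<Longrightarrow> open (Qf x) \<and> compact (Mf x) \<and> x \<in> Qf x \<and> Qf x \<subseteq> Mf x \<and> Mf x \<subseteq> G"
    by metis
  have "C \<subseteq> (\<Union>x\<in>C. Qf x)" using P by blast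
  then obtain C' where C': "C' \<subseteq> C" "finite C'" "C \<subseteq> (\<Union>x\<in>C'. Qf x)"
    using compactE_image[OF assms(2), of C Qf] P by blast
  show ?thesis
    apply (rule exI[of _ "\<Union>x\<in>C'. Qf x"], rule exI[of _ "\<Union>x\<in>C'. Mf x"])
    using C' P by (intro conjI compact_UN open_UN; blast?)
qed

lemma Aut_cont: "g \<in> Aut A \<Longrightarrow> continuous_on UNIV g"
  unfolding Aut_def holo_map_def by blast

lemma Aut_bij: "g \<in> Aut A \<Longrightarrow> bij g"
  unfolding Aut_def by blast

lemma cont_funpow:
  fixes g :: "'a::topological_space \<Rightarrow> 'a"
  shows "continuous_on UNIV g \<Longrightarrow> continuous_on UNIV (g ^^ j)"
proof (induction j)
  case 0
  then show ?case by (simp add: continuous_on_id id_def)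
next
  case (Suc j)
  have "continuous_on UNIV (g \<circ> (g ^^ j))"
    by (rule continuous_on_compose) (use Suc in \<open>auto intro: continuous_on_subset\<close>)
  then show ?case by simp
qed

lemma topspace_aut: "topspace (aut_top A) = Aut A"
proof -
  have "{g\<in>Aut A. g ` {} \<subseteq> UNIV} \<in> {{g\<in>Aut A. g ` K \<subseteq> U} | K U. compact K \<and> open U}"
    by blast
  then have "Aut A \<subseteq> \<Union>{{g\<in>Aut A. g ` K \<subseteq> U} | K U. compact K \<and> open U}" by blast
  moreover have "\<Union>{{g\<in>Aut A. g ` K \<subseteq> U} | K U. compact K \<and> open U} \<subseteq> Aut A" by blast
  ultimately show ?thesis
    unfolding aut_top_def compact_open_top_def topology_generated_by_topspace by (rule antisym[rotated])
qed

lemma open_basic: "compact K \<Longrightarrow> open U \<Longrightarrow> openin (aut_top A) {g\<in>Aut A. g ` K \<subseteq> U}"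
  unfolding aut_top_def compact_open_top_def by (rule topology_generated_by_Basis) blast

lemma open_iter:
  fixes A :: "('a::topological_space set \<times> ('a \<Rightarrow> complex ^ 'n)) set"
  assumes at: "complex_atlas A" and C: "compact C"
  shows "open W \<Longrightarrow> openin (aut_top A) {g\<in>Aut A. (g^^j) ` C \<subseteq> W}"
proof (induction j arbitrary: W)
  case 0
  show ?case
  proof (cases "C \<subseteq> W")
    case True
    then have "{g\<in>Aut A. (g^^0) ` C \<subseteq> W} = topspace (aut_top A)" by (auto simp: topspace_aut)
    then show ?thesis by (metis openin_topspace)
  next
    case False
    then have "{g\<in>Aut A. (g^^0) ` C \<subseteq> W} = {}" by auto
    then show ?thesis by (metis openin_empty)
  qed
next
  case (Suc j)
  show ?case
  proof (subst openin_subopen, intro ballI)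
    fix g0 assume g0: "g0 \<in> {g\<in>Aut A. (g^^Suc j) ` C \<subseteq> W}"
    define D where "D = (g0^^j) ` C"
    have cg0: "continuous_on UNIV g0" using g0 Aut_cont by blast
    have "compact D" unfolding D_def
      using compact_continuous_image continuous_on_subset cont_funpow[OF cg0] C by blast
    moreover have "open (g0 -` W)" using cg0 Suc.prems
      by (metis continuous_on_open_vimage inf_top.right_neutral open_UNIV)
    moreover have "D \<subseteq> g0 -` W" using g0 by (auto simp: D_def)
    ultimately obtain Q M where OM: "open Q" "compact M" "D \<subseteq> Q" "Q \<subseteq> M" "M \<subseteq> g0 -` W"
      using lc_compact[OF at] by metis
    define T where "T = {g\<in>Aut A. g ` M \<subseteq> W} \<inter> {g\<in>Aut A. (g^^j) ` C \<subseteq> Q}"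
    have "openin (aut_top A) T" unfolding T_def
      using open_basic[OF OM(2) Suc.prems] Suc.IH[OF OM(1)] by blast
    moreover have "g0 \<in> T" using g0 OM unfolding T_def D_def by auto
    moreover have "T \<subseteq> {g\<in>Aut A. (g^^Suc j) ` C \<subseteq> W}"
      using OM(4) unfolding T_def by (auto simp: image_iff) (metis image_subset_iff subsetD)
    ultimately show "\<exists>T. openin (aut_top A) T \<and> g0 \<in> T \<and> T \<subseteq> {g\<in>Aut A. (g^^Suc j) ` C \<subseteq> W}"
      by blast
  qed
qed

lemma topspace_XA: "topspace (XA_top A) = UNIV \<times> Aut A"
  by (simp add: XA_top_def topspace_aut)

lemma open_box: "open Q \<Longrightarrow> openin (aut_top A) V \<Longrightarrow> openin (XA_top A) (Q \<times> V)"
  unfolding XA_top_def openin_prod_Times_iff by simp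

lemma iter_inv1:
  fixes g :: "'a \<Rightarrow> 'a"
  assumes "bij g" shows "(g^^j) ((inv g^^j) x) = x"
proof (induction j arbitrary: x)
  case 0 then show ?case by simp
next
  case (Suc j)
  have e1: "g^^Suc j = g \<circ> g^^j" by (rule funpow.simps(2))
  have e2: "inv g^^Suc j = (inv g^^j) \<circ> inv g" by (rule funpow_Suc_right)
  have "(g^^Suc j) ((inv g^^Suc j) x) = g ((g^^j) ((inv g^^j) (inv g x)))"
    unfolding e1 e2 by simp
  also have "\<dots> = x" using Suc.IH assms by (simp add: bij_is_surj surj_f_inv_f)
  finally show ?case .
qed

lemma iter_inv2:
  fixes g :: "'a \<Rightarrow> 'a"
  assumes "bij g" shows "(inv g^^j) ((g^^j) x) = x"
proof (induction j arbitrary: x)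
  case 0 then show ?case by simp
next
  case (Suc j)
  have e1: "g^^Suc j = g \<circ> g^^j" by (rule funpow.simps(2))
  have e2: "inv g^^Suc j = (inv g^^j) \<circ> inv g" by (rule funpow_Suc_right)
  have "(inv g^^Suc j) ((g^^Suc j) x) = (inv g^^j) (inv g (g ((g^^j) x)))"
    unfolding e1 e2 by simp
  also have "\<dots> = x" using Suc.IH assms by (simp add: bij_is_inj inv_f_f)
  finally show ?case .
qed

lemma iter_inv_mem:
  fixes g :: "'a \<Rightarrow> 'a"
  assumes "bij g" shows "(inv g^^j) x \<in> K \<longleftrightarrow> x \<in> (g^^j) ` K"
proof
  assume "(inv g^^j) x \<in> K"
  then show "x \<in> (g^^j) ` K" using iter_inv1[OF assms, of j x] by (metis image_eqI)
next
  assume "x \<in> (g^^j) ` K"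
  then show "(inv g^^j) x \<in> K" using iter_inv2[OF assms, of j] by auto
qed

lemma Tplus_closed:
  fixes A :: "('a::t2_space set \<times> ('a \<Rightarrow> complex ^ 'n)) set"
  assumes at: "complex_atlas A" and K: "compact K"
  shows "T_plus A K \<subseteq> topspace (XA_top A)" "openin (XA_top A) (topspace (XA_top A) - T_plus A K)"
proof -
  show "T_plus A K \<subseteq> topspace (XA_top A)" by (auto simp: T_plus_def topspace_XA)
  show "openin (XA_top A) (topspace (XA_top A) - T_plus A K)"
  proof (subst openin_subopen, intro ballI)
    fix z assume z: "z \<in> topspace (XA_top A) - T_plus A K"
    obtain x g where zxg: "z = (x,g)" by (cases z)
    with z have g: "g \<in> Aut A" by (auto simp: topspace_XA)
    with z zxg obtain j where j: "(g^^j) x \<notin> K" by (auto simp: T_plus_def)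
    define W where "W = - K"
    have oW: "open W" unfolding W_def using K compact_imp_closed by blast
    have "open ((g^^j) -` W)"
      using cont_funpow[OF Aut_cont[OF g]] oW
      by (metis continuous_on_open_vimage inf_top.right_neutral open_UNIV)
    moreover have "x \<in> (g^^j) -` W" using j by (simp add: W_def)
    ultimately obtain Q M where QM: "open Q" "compact M" "x \<in> Q" "Q \<subseteq> M" "M \<subseteq> (g^^j) -` W"
      using lc_point[OF at] by metis
    define T where "T = Q \<times> {h\<in>Aut A. (h^^j) ` M \<subseteq> W}"
    have "openin (XA_top A) T" unfolding T_def
      by (rule open_box[OF QM(1) open_iter[OF at QM(2) oW]])
    moreover have "z \<in> T" using zxg QM g unfolding T_def by auto
    moreover have "T \<subseteq> topspace (XA_top A) - T_plus A K"
    proof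
      fix w assume "w \<in> T"
      then obtain y h where w: "w = (y,h)" "y \<in> Q" "h \<in> Aut A" "(h^^j) ` M \<subseteq> W"
        unfolding T_def by blast
      then have "(h^^j) y \<notin> K" using QM(4) by (auto simp: W_def)
      then show "w \<in> topspace (XA_top A) - T_plus A K" using w by (auto simp: T_plus_def topspace_XA)
    qed
    ultimately show "\<exists>T. openin (XA_top A) T \<and> z \<in> T \<and> T \<subseteq> topspace (XA_top A) - T_plus A K"
      by blast
  qed
qed

lemma Tminus_closed:
  fixes A :: "('a::t2_space set \<times> ('a \<Rightarrow> complex ^ 'n)) set"
  assumes at: "complex_atlas A" and K: "compact K"
  shows "T_minus A K \<subseteq> topspace (XA_top A)" "openin (XA_top A) (topspace (XA_top A) - T_minus A K)"
proof -
  show "T_minus A K \<subseteq> topspace (XA_top A)" by (auto simp: T_minus_def topspace_XA)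
  show "openin (XA_top A) (topspace (XA_top A) - T_minus A K)"
  proof (subst openin_subopen, intro ballI)
    fix z assume z: "z \<in> topspace (XA_top A) - T_minus A K"
    obtain x g where zxg: "z = (x,g)" by (cases z)
    with z have g: "g \<in> Aut A" by (auto simp: topspace_XA)
    with z zxg obtain j where j: "(inv g^^j) x \<notin> K" by (auto simp: T_minus_def)
    define D where "D = (g^^j) ` K"
    have xD: "x \<notin> D" using j iter_inv_mem[OF Aut_bij[OF g]] by (simp add: D_def)
    have cD: "compact D" unfolding D_def
      using compact_continuous_image continuous_on_subset cont_funpow[OF Aut_cont[OF g]] K by blast
    have "open (- D)" using cD compact_imp_closed by blast
    then obtain Q M where QM: "open Q" "compact M" "x \<in> Q" "Q \<subseteq> M" "M \<subseteq> - D"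
      using lc_point[OF at] xD by (metis ComplI)
    define W where "W = - M"
    have oW: "open W" unfolding W_def using QM(2) compact_imp_closed by blast
    define T where "T = Q \<times> {h\<in>Aut A. (h^^j) ` K \<subseteq> W}"
    have "openin (XA_top A) T" unfolding T_def
      by (rule open_box[OF QM(1) open_iter[OF at K oW]])
    moreover have "z \<in> T" using zxg QM g unfolding T_def W_def D_def by auto
    moreover have "T \<subseteq> topspace (XA_top A) - T_minus A K"
    proof
      fix w assume "w \<in> T"
      then obtain y h where w: "w = (y,h)" "y \<in> Q" "h \<in> Aut A" "(h^^j) ` K \<subseteq> W"
        unfolding T_def by blast
      then have "y \<notin> (h^^j) ` K" using QM(4) by (auto simp: W_def)
      then have "(inv h^^j) y \<notin> K" using iter_inv_mem[OF Aut_bij[OF w(3)]] by simp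
      then show "w \<in> topspace (XA_top A) - T_minus A K" using w by (auto simp: T_minus_def topspace_XA)
    qed
    ultimately show "\<exists>T. openin (XA_top A) T \<and> z \<in> T \<and> T \<subseteq> topspace (XA_top A) - T_minus A K"
      by blast
  qed
qed

lemma bd_open:
  assumes "openin X (topspace X - T)"
  shows "openin X ((topspace X - T) \<union> X interior_of T)"
  using assms by auto

lemma bd_dense:
  assumes "T \<subseteq> topspace X"
  shows "X closure_of ((topspace X - T) \<union> X interior_of T) = topspace X"
proof -
  have "z \<in> X closure_of ((topspace X - T) \<union> X interior_of T)" if z: "z \<in> topspace X" for z
    unfolding in_closure_of
  proof (intro conjI allI impI z)
    fix S assume S: "z \<in> S \<and> openin X S"
    show "\<exists>y. y \<in> (topspace X - T) \<union> X interior_of T \<and> y \<in> S"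
    proof (cases "S \<subseteq> T")
      case True
      then have "S \<subseteq> X interior_of T" using S interior_of_maximal by blast
      then show ?thesis using S by blast
    next
      case False
      then obtain y where "y \<in> S" "y \<notin> T" by blast
      moreover have "y \<in> topspace X" using S \<open>y \<in> S\<close> openin_subset by blast
      ultimately show ?thesis by blast
    qed
  qed
  moreover have "X closure_of ((topspace X - T) \<union> X interior_of T) \<subseteq> topspace X"
    by (rule closure_of_subset_topspace)
  ultimately show ?thesis by blast
qed

lemma exhaust:
  fixes A :: "('a::{t2_space,second_countable_topology} set \<times> ('a \<Rightarrow> complex ^ 'n)) set"
  assumes at: "complex_atlas A"
  shows "\<exists>\<K>::'a set set. countable \<K> \<and> (\<forall>L\<in>\<K>. compact L) \<and> (\<forall>K. compact K \<longrightarrow> (\<exists>L\<in>\<K>. K \<subseteq> L))"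
proof -
  obtain \<B> :: "'a set set" where cB: "countable \<B>" and bB: "topological_basis \<B>"
    using ex_countable_basis by blast
  define \<B>' where "\<B>' = {B\<in>\<B>. \<exists>M. compact M \<and> B \<subseteq> M}"
  define Mf where "Mf B = (SOME M. compact M \<and> B \<subseteq> M)" for B :: "'a set"
  have Mf: "compact (Mf B) \<and> B \<subseteq> Mf B" if "B \<in> \<B>'" for B
  proof -
    from that have "\<exists>M. compact M \<and> B \<subseteq> M" by (simp add: \<B>'_def)
    then show ?thesis unfolding Mf_def by (rule someI_ex)
  qed
  define \<K> where "\<K> = (\<lambda>S. \<Union>(Mf ` S)) ` {S. finite S \<and> S \<subseteq> \<B>'}"
  have "countable \<B>'" using cB by (rule countable_subset[rotated]) (auto simp: \<B>'_def)
  then have "countable \<K>" unfolding \<K>_def by (intro countable_image countable_Collect_finite_subset)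
  moreover have "\<forall>L\<in>\<K>. compact L" unfolding \<K>_def using Mf by auto
  moreover have "\<exists>L\<in>\<K>. K \<subseteq> L" if K: "compact K" for K
  proof -
    have "K \<subseteq> \<Union>\<B>'"
    proof
      fix x assume "x \<in> K"
      obtain Q M where QM: "open Q" "compact M" "x \<in> Q" "Q \<subseteq> M"
        using lc_point[OF at open_UNIV, of x] by blast
      then obtain B where "B \<in> \<B>" "x \<in> B" "B \<subseteq> Q" using bB topological_basisE by metis
      then have "B \<in> \<B>'" using QM unfolding \<B>'_def by blast
      then show "x \<in> \<Union>\<B>'" using \<open>x \<in> B\<close> by blast
    qed
    moreover have "\<And>B. B \<in> \<B>' \<Longrightarrow> open B" using bB topological_basis_open unfolding \<B>'_def by blast
    ultimately obtain S where S: "S \<subseteq> \<B>'" "finite S" "K \<subseteq> \<Union>S"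
      using compactE[OF K] by metis
    then have "K \<subseteq> \<Union>(Mf ` S)" using Mf by blast
    moreover have "\<Union>(Mf ` S) \<in> \<K>" using S unfolding \<K>_def by blast
    ultimately show ?thesis by blast
  qed
  ultimately show ?thesis by blast
qed

lemma proj_open:
  assumes G: "openin (prod_topology X Y) G" and B: "openin X B"
  shows "openin Y {y\<in>topspace Y. \<exists>x\<in>B. (x,y)\<in>G}"
proof (subst openin_subopen, intro ballI)
  fix y0 assume "y0 \<in> {y\<in>topspace Y. \<exists>x\<in>B. (x,y)\<in>G}"
  then obtain x where x: "x \<in> B" "(x,y0) \<in> G" "y0 \<in> topspace Y" by blast
  have "openin (prod_topology X Y) (B \<times> topspace Y)"
    using B openin_topspace openin_prod_Times_iff by blast
  then have "openin (prod_topology X Y) (G \<inter> (B \<times> topspace Y))"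
    using G by (rule openin_Int[rotated])
  moreover have "(x,y0) \<in> G \<inter> (B \<times> topspace Y)" using x by blast
  ultimately obtain U V where UV: "openin X U" "openin Y V" "x \<in> U" "y0 \<in> V" "U \<times> V \<subseteq> G \<inter> (B \<times> topspace Y)"
    unfolding openin_prod_topology_alt by meson
  have "V \<subseteq> {y\<in>topspace Y. \<exists>x\<in>B. (x,y)\<in>G}"
  proof
    fix y assume "y \<in> V"
    then have "(x,y) \<in> G \<inter> (B \<times> topspace Y)" using UV by blast
    then show "y \<in> {y\<in>topspace Y. \<exists>x\<in>B. (x,y)\<in>G}" by blast
  qed
  then show "\<exists>T. openin Y T \<and> y0 \<in> T \<and> T \<subseteq> {y\<in>topspace Y. \<exists>x\<in>B. (x,y)\<in>G}"
    using UV by blast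
qed

lemma proj_dense:
  assumes G: "prod_topology X Y closure_of G = topspace (prod_topology X Y)"
    and B: "openin X B" "B \<noteq> {}"
  shows "Y closure_of {y\<in>topspace Y. \<exists>x\<in>B. (x,y)\<in>G} = topspace Y"
proof -
  obtain b where b: "b \<in> B" using B by blast
  have bX: "b \<in> topspace X" using b B openin_subset by blast
  have "y \<in> Y closure_of {y\<in>topspace Y. \<exists>x\<in>B. (x,y)\<in>G}" if y: "y \<in> topspace Y" for y
    unfolding in_closure_of
  proof (intro conjI allI impI y)
    fix T assume T: "y \<in> T \<and> openin Y T"
    have bY: "(b,y) \<in> topspace (prod_topology X Y)" using bX y by simp
    then have "(b,y) \<in> prod_topology X Y closure_of G" using G by (simp only:)
    moreover have "(b,y) \<in> B \<times> T" using b T by blast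
    moreover have "openin (prod_topology X Y) (B \<times> T)"
      using T B(1) openin_prod_Times_iff by blast
    ultimately obtain w where w: "w \<in> G" "w \<in> B \<times> T" unfolding in_closure_of by meson
    obtain x' y' where "w = (x',y')" by (cases w)
    with w have xy: "(x',y') \<in> G" "x' \<in> B" "y' \<in> T" by auto
    have "y' \<in> topspace Y" using T xy(3) openin_subset by blast
    with xy show "\<exists>z. z \<in> {y\<in>topspace Y. \<exists>x\<in>B. (x,y)\<in>G} \<and> z \<in> T" by blast
  qed
  moreover have "Y closure_of {y\<in>topspace Y. \<exists>x\<in>B. (x,y)\<in>G} \<subseteq> topspace Y"
    by (rule closure_of_subset_topspace)
  ultimately show ?thesis by blast
qed

lemma slice_open:
  assumes G: "openin (prod_topology X Y) G"
  shows "openin X {x\<in>topspace X. (x,y)\<in>G}"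
proof (subst openin_subopen, intro ballI)
  fix x0 assume "x0 \<in> {x\<in>topspace X. (x,y)\<in>G}"
  then have "(x0,y) \<in> G" by blast
  then obtain U V where UV: "openin X U" "openin Y V" "x0 \<in> U" "y \<in> V" "U \<times> V \<subseteq> G"
    using G unfolding openin_prod_topology_alt by meson
  have "U \<subseteq> topspace X" using UV(1) by (rule openin_subset)
  then have "U \<subseteq> {x\<in>topspace X. (x,y)\<in>G}" using UV(4,5) by blast
  then show "\<exists>T. openin X T \<and> x0 \<in> T \<and> T \<subseteq> {x\<in>topspace X. (x,y)\<in>G}" using UV by blast
qed

lemma slice_dense:
  fixes G :: "('a::topological_space \<times> 'b) set"
  assumes bB: "topological_basis \<B>" and H: "\<forall>B\<in>\<B>. B \<noteq> {} \<longrightarrow> (\<exists>x\<in>B. (x,y)\<in>G)"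
  shows "euclidean closure_of {x. (x,y)\<in>G} = topspace euclidean"
proof -
  have "x \<in> euclidean closure_of {x. (x,y)\<in>G}" for x
    unfolding in_closure_of
  proof (intro conjI allI impI)
    show "x \<in> topspace euclidean" by simp
    fix T assume T: "x \<in> T \<and> openin euclidean T"
    then obtain B where "B \<in> \<B>" "x \<in> B" "B \<subseteq> T" using bB topological_basisE by (metis open_openin)
    then obtain z where "z \<in> B" "(z,y)\<in>G" using H by blast
    then show "\<exists>z. z \<in> {x. (x,y)\<in>G} \<and> z \<in> T" using \<open>B \<subseteq> T\<close> by blast
  qed
  then show ?thesis by auto
qed

lemma tame_from:
  fixes A :: "('a::topological_space set \<times> ('a \<Rightarrow> complex ^ 'n)) set"
  assumes f: "f \<in> Aut A" and KK: "\<forall>L\<in>\<K>. compact L" "\<forall>K. compact K \<longrightarrow> (\<exists>L\<in>\<K>. K \<subseteq> L)"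
    and H: "\<forall>L\<in>\<K>. (p,f) \<in> (topspace (XA_top A) - T_plus A L) \<union> XA_top A interior_of T_plus A L
                  \<and> (p,f) \<in> (topspace (XA_top A) - T_minus A L) \<union> XA_top A interior_of T_minus A L"
  shows "tame A p f"
  unfolding tame_def
proof (intro allI impI)
  fix K assume K: "compact K \<and> (p,f) \<in> XA_top A interior_of (T_plus A K \<union> T_minus A K)"
  then have cK: "compact K" by blast
  then obtain L where L: "L \<in> \<K>" "K \<subseteq> L" using KK(2) by blast
  have "XA_top A interior_of (T_plus A K \<union> T_minus A K) \<subseteq> T_plus A K \<union> T_minus A K"
    by (rule interior_of_subset)
  then have "(p,f) \<in> T_plus A K \<union> T_minus A K" using K by blast
  moreover have "T_plus A K \<subseteq> T_plus A L" "T_minus A K \<subseteq> T_minus A L"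
    using L(2) unfolding T_plus_def T_minus_def by auto
  ultimately have pf: "(p,f) \<in> T_plus A L \<union> T_minus A L" by blast
  have HL: "(p,f) \<in> (topspace (XA_top A) - T_plus A L) \<union> XA_top A interior_of T_plus A L"
    "(p,f) \<in> (topspace (XA_top A) - T_minus A L) \<union> XA_top A interior_of T_minus A L"
    using H L(1) by auto
  from pf HL have "(p,f) \<in> XA_top A interior_of T_plus A L \<union> XA_top A interior_of T_minus A L"
    by blast
  moreover have "compact L" using KK(1) L(1) by blast
  ultimately show "\<exists>L. compact L \<and> (p,f) \<in> XA_top A interior_of T_plus A L \<union> XA_top A interior_of T_minus A L"
    by blast
qed

theorem mainTheorem2:
  fixes A :: "('a::{t2_space, second_countable_topology} set \<times> ('a \<Rightarrow> complex ^ 'n)) set"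
  assumes "complex_atlas A"
  shows "residual_in (XA_top A) {(p,f). f \<in> Aut A \<and> tame A p f}
       \<and> residual_in (aut_top A) {f \<in> Aut A. residual_in (euclidean :: 'a topology) {p. tame A p f}}"
proof -
  note at = assms
  obtain \<K> :: "'a set set" where KK: "countable \<K>" "\<forall>L\<in>\<K>. compact L" "\<forall>K. compact K \<longrightarrow> (\<exists>L\<in>\<K>. K \<subseteq> L)"
    using exhaust[OF at] by blast
  define X where "X = XA_top A"
  define Gp where "Gp L = (topspace X - T_plus A L) \<union> X interior_of T_plus A L" for L
  define Gm where "Gm L = (topspace X - T_minus A L) \<union> X interior_of T_minus A L" for L
  define \<F> where "\<F> = Gp ` \<K> \<union> Gm ` \<K>"
  have cF: "countable \<F>" unfolding \<F>_def using KK(1) by simp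
  have oF: "\<forall>G\<in>\<F>. openin X G \<and> X closure_of G = topspace X"
  proof
    fix G assume "G \<in> \<F>"
    then obtain L where L: "L \<in> \<K>" "G = Gp L \<or> G = Gm L" unfolding \<F>_def by blast
    then have cL: "compact L" using KK(2) by blast
    have p1: "openin X (Gp L)" "X closure_of (Gp L) = topspace X"
      unfolding Gp_def X_def
      using bd_open[OF Tplus_closed(2)[OF at cL]] bd_dense[OF Tplus_closed(1)[OF at cL]] by (simp_all only:)
    have p2: "openin X (Gm L)" "X closure_of (Gm L) = topspace X"
      unfolding Gm_def X_def
      using bd_open[OF Tminus_closed(2)[OF at cL]] bd_dense[OF Tminus_closed(1)[OF at cL]] by (simp_all only:)
    from L(2) show "openin X G \<and> X closure_of G = topspace X"
    proof
      assume "G = Gp L" then show ?thesis using p1 by (simp only:)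
    next
      assume "G = Gm L" then show ?thesis using p2 by (simp only:)
    qed
  qed
  have tF: "tame A p f" if "f \<in> Aut A" "\<forall>G\<in>\<F>. (p,f) \<in> G" for p f
  proof (rule tame_from[OF that(1) KK(2) KK(3)], intro ballI)
    fix L assume "L \<in> \<K>"
    then have "Gp L \<in> \<F>" "Gm L \<in> \<F>" unfolding \<F>_def by blast+
    then have "(p,f) \<in> Gp L" "(p,f) \<in> Gm L" using that(2) by blast+
    then show "(p,f) \<in> (topspace (XA_top A) - T_plus A L) \<union> XA_top A interior_of T_plus A L
                  \<and> (p,f) \<in> (topspace (XA_top A) - T_minus A L) \<union> XA_top A interior_of T_minus A L"
      unfolding Gp_def Gm_def X_def by (intro conjI)
  qed
  have partA: "residual_in (XA_top A) {(p,f). f \<in> Aut A \<and> tame A p f}"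
    unfolding residual_in_def
  proof (intro conjI exI[of _ \<F>])
    show "{(p,f). f \<in> Aut A \<and> tame A p f} \<subseteq> topspace (XA_top A)" by (auto simp: topspace_XA)
    show "countable \<F>" by (rule cF)
    show "\<forall>U\<in>\<F>. openin (XA_top A) U \<and> XA_top A closure_of U = topspace (XA_top A)"
      by (rule oF[unfolded X_def])
    show "topspace (XA_top A) \<inter> \<Inter>\<F> \<subseteq> {(p,f). f \<in> Aut A \<and> tame A p f}"
    proof
      fix z assume z: "z \<in> topspace (XA_top A) \<inter> \<Inter>\<F>"
      obtain p f where zpf: "z = (p,f)" by (cases z)
      with z have "f \<in> Aut A" "\<forall>G\<in>\<F>. (p,f) \<in> G" by (auto simp: topspace_XA)
      then have "tame A p f" by (rule tF)
      then show "z \<in> {(p,f). f \<in> Aut A \<and> tame A p f}" using zpf \<open>f \<in> Aut A\<close> by simp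
    qed
  qed
  obtain \<B> :: "'a set set" where cB: "countable \<B>" and bB: "topological_basis \<B>"
    using ex_countable_basis by blast
  define Q where "Q G B = {f\<in>topspace (aut_top A). \<exists>x\<in>B. (x,f)\<in>G}" for G :: "('a \<times> ('a \<Rightarrow> 'a)) set" and B :: "'a set"
  define \<F>2 where "\<F>2 = (\<lambda>(G,B). Q G B) ` (\<F> \<times> (\<B> - {{}}))"
  have cF2: "countable \<F>2" unfolding \<F>2_def using cF cB by auto
  have oF2: "\<forall>U\<in>\<F>2. openin (aut_top A) U \<and> aut_top A closure_of U = topspace (aut_top A)"
  proof
    fix U assume "U \<in> \<F>2"
    then obtain G B where GB: "G \<in> \<F>" "B \<in> \<B>" "B \<noteq> {}" "U = Q G B" unfolding \<F>2_def by blast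
    have oB: "openin euclidean B" using bB GB(2) topological_basis_open open_openin by blast
    have G1: "openin (prod_topology euclidean (aut_top A)) G"
      and G2: "prod_topology euclidean (aut_top A) closure_of G = topspace (prod_topology euclidean (aut_top A))"
      using bspec[OF oF GB(1)] unfolding X_def XA_top_def by (simp_all only:)
    show "openin (aut_top A) U \<and> aut_top A closure_of U = topspace (aut_top A)"
      unfolding GB(4) Q_def using proj_open[OF G1 oB] proj_dense[OF G2 oB GB(3)] by (intro conjI)
  qed
  have partB: "residual_in (aut_top A) {f \<in> Aut A. residual_in (euclidean :: 'a topology) {p. tame A p f}}"
    unfolding residual_in_def[of "aut_top A"]
  proof (intro conjI exI[of _ \<F>2])
    show "{f \<in> Aut A. residual_in (euclidean :: 'a topology) {p. tame A p f}} \<subseteq> topspace (aut_top A)"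
      by (auto simp: topspace_aut)
    show "countable \<F>2" by (rule cF2)
    show "\<forall>U\<in>\<F>2. openin (aut_top A) U \<and> aut_top A closure_of U = topspace (aut_top A)" by (rule oF2)
    show "topspace (aut_top A) \<inter> \<Inter>\<F>2 \<subseteq> {f \<in> Aut A. residual_in (euclidean :: 'a topology) {p. tame A p f}}"
    proof
      fix f assume f: "f \<in> topspace (aut_top A) \<inter> \<Inter>\<F>2"
      then have fA: "f \<in> Aut A" by (simp add: topspace_aut)
      define \<F>3 where "\<F>3 = (\<lambda>G. {x. (x,f)\<in>G}) ` \<F>"
      have "residual_in (euclidean :: 'a topology) {p. tame A p f}"
        unfolding residual_in_def
      proof (intro conjI exI[of _ \<F>3])
        show "{p. tame A p f} \<subseteq> topspace euclidean" by simp
        show "countable \<F>3" unfolding \<F>3_def using cF by simp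
        show "\<forall>U\<in>\<F>3. openin euclidean U \<and> euclidean closure_of U = topspace euclidean"
        proof
          fix U assume "U \<in> \<F>3"
          then obtain G where G: "G \<in> \<F>" "U = {x. (x,f)\<in>G}" unfolding \<F>3_def by blast
          have G1: "openin (prod_topology euclidean (aut_top A)) G"
            using bspec[OF oF G(1)] unfolding X_def XA_top_def by (elim conjE)
          have "openin euclidean U" using slice_open[OF G1, of f] G(2) by (simp only: topspace_euclidean UNIV_I simp_thms mem_Collect_eq)
          moreover have "\<forall>B\<in>\<B>. B \<noteq> {} \<longrightarrow> (\<exists>x\<in>B. (x,f)\<in>G)"
          proof (intro ballI impI)
            fix B assume "B \<in> \<B>" "B \<noteq> {}"
            then have "(G,B) \<in> \<F> \<times> (\<B> - {{}})" using G(1) by blast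
            then have "Q G B \<in> \<F>2" unfolding \<F>2_def by (rule rev_image_eqI) simp
            moreover have "f \<in> \<Inter>\<F>2" using f by (rule IntD2)
            ultimately have "f \<in> Q G B" by (rule InterD[rotated])
            then show "\<exists>x\<in>B. (x,f)\<in>G" unfolding Q_def by (elim CollectE conjE)
          qed
          then have "euclidean closure_of U = topspace euclidean"
            unfolding G(2) by (rule slice_dense[OF bB])
          ultimately show "openin euclidean U \<and> euclidean closure_of U = topspace euclidean" by (rule conjI)
        qed
        show "topspace euclidean \<inter> \<Inter>\<F>3 \<subseteq> {p. tame A p f}"
        proof
          fix p assume "p \<in> topspace euclidean \<inter> \<Inter>\<F>3"
          then have "\<forall>G\<in>\<F>. (p,f) \<in> G" unfolding \<F>3_def by blast
          then have "tame A p f" by (rule tF[OF fA])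
          then show "p \<in> {p. tame A p f}" by simp
        qed
      qed
      then show "f \<in> {f \<in> Aut A. residual_in (euclidean :: 'a topology) {p. tame A p f}}"
        using fA by (intro CollectI conjI)
    qed
  qed
  show ?thesis using partA partB by (rule conjI)
qed

end
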